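(* Let $S$ be an annulus, $(S,M,T)$ a triangulation, $B$ a boundary component of $S$, and $\chi_1,\chi_2$ admissible cuts of $(S,M,T)$ with $\chi_1(B)=\chi_2(B)$. Let $D=\{\triangle:\chi_{1,\triangle}(B)\ne\chi_{2,\triangle}(B)\}$. Then $\#D=2m$ for some $m\in\mathbb{N}$. Further, for each triangle $\triangle\in D$ there is a corresponding triangle $\triangle'$ with $\chi_{1,\triangle}(B)=\chi_{2,\triangle'}(B)$.
   Context: $M$ is a finite set of marked points on $\partial S$ with at least one on each boundary component; $T$ is a triangulation (maximal set of pairwise non-crossing arcs between marked points), dividing $S$ into triangles; internal triangles have no boundary segment as a side. An admissible cut $\chi$ selects one vertex (a marked point) of each internal triangle; each such choice is a local cut. $\chi(B)$ is the number of local cuts of $\chi$ whose marked point lies on $B$, and $\chi_{\triangle}(B)\in\{0,1\}$ is the number of local cuts of $\chi$ contained in the triangle $\triangle$ whose marked point lies on $B$. *)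

theory Defs
  imports Main
begin

text \<open>Triangles are elements of a finite type-variable set Tri; each triangle
  has three corners indexed 0,1,2 (corner t i is the marked point at corner i;
  corners may coincide) and three sides, side i joining corners i and (i+1) mod 3;
  bdry_side t i says that side i of t is a boundary segment.
  bc assigns to each marked point the boundary component it lies on.\<close>

definition marked_annulus_triangulation ::
  "'m set \<Rightarrow> ('m \<Rightarrow> 'b) \<Rightarrow> 't set \<Rightarrow> ('t \<Rightarrow> nat \<Rightarrow> 'm) \<Rightarrow> ('t \<Rightarrow> nat \<Rightarrow> bool) \<Rightarrow> bool"
where
  "marked_annulus_triangulation M bc Tri corner bdry_side \<longleftrightarrow>
     finite M \<and> card (bc ` M) = 2 \<and> finite Tri \<and> Tri \<noteq> {} \<and>
     (\<forall>t\<in>Tri. \<forall>i<3. corner t i \<in> M)"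

definition internal_tri :: "('t \<Rightarrow> nat \<Rightarrow> bool) \<Rightarrow> 't \<Rightarrow> bool" where
  "internal_tri bdry_side t \<longleftrightarrow> (\<forall>i<3. \<not> bdry_side t i)"

definition internal_tris :: "'t set \<Rightarrow> ('t \<Rightarrow> nat \<Rightarrow> bool) \<Rightarrow> 't set" where
  "internal_tris Tri bdry_side = {t\<in>Tri. internal_tri bdry_side t}"

text \<open>An admissible cut selects, for every internal triangle, one of its three
  corners (the local cut), given by its index chi t < 3.\<close>
definition admissible_cut :: "'t set \<Rightarrow> ('t \<Rightarrow> nat \<Rightarrow> bool) \<Rightarrow> ('t \<Rightarrow> nat) \<Rightarrow> bool" where
  "admissible_cut Tri bdry_side chi \<longleftrightarrow> (\<forall>t\<in>internal_tris Tri bdry_side. chi t < 3)"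

text \<open>chi_triangle(B): 1 if the local cut of chi in t lies at a marked point on B, else 0
  (0 for non-internal triangles, which carry no local cut).\<close>
definition cut_tri_count ::
  "('t \<Rightarrow> nat \<Rightarrow> bool) \<Rightarrow> ('t \<Rightarrow> nat \<Rightarrow> 'm) \<Rightarrow> ('m \<Rightarrow> 'b) \<Rightarrow> ('t \<Rightarrow> nat) \<Rightarrow> 'b \<Rightarrow> 't \<Rightarrow> nat"
where
  "cut_tri_count bdry_side corner bc chi B t =
     (if internal_tri bdry_side t \<and> bc (corner t (chi t)) = B then 1 else 0)"

definition cut_count ::
  "'t set \<Rightarrow> ('t \<Rightarrow> nat \<Rightarrow> bool) \<Rightarrow> ('t \<Rightarrow> nat \<Rightarrow> 'm) \<Rightarrow> ('m \<Rightarrow> 'b) \<Rightarrow> ('t \<Rightarrow> nat) \<Rightarrow> 'b \<Rightarrow> nat"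
where
  "cut_count Tri bdry_side corner bc chi B =
     (\<Sum>t\<in>internal_tris Tri bdry_side. cut_tri_count bdry_side corner bc chi B t)"

end

theory Submission
  imports Defs
begin

theorem lemma6p11:
  fixes M :: "'m set" and bc :: "'m \<Rightarrow> 'b" and Tri :: "'t set"
    and corner :: "'t \<Rightarrow> nat \<Rightarrow> 'm" and bdry_side :: "'t \<Rightarrow> nat \<Rightarrow> bool"
    and chi1 chi2 :: "'t \<Rightarrow> nat" and B :: 'b
  assumes "marked_annulus_triangulation M bc Tri corner bdry_side"
    and "B \<in> bc ` M"
    and "admissible_cut Tri bdry_side chi1"
    and "admissible_cut Tri bdry_side chi2"
    and "cut_count Tri bdry_side corner bc chi1 B = cut_count Tri bdry_side corner bc chi2 B"
  defines "D \<equiv> {t \<in> Tri. cut_tri_count bdry_side corner bc chi1 B t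
                          \<noteq> cut_tri_count bdry_side corner bc chi2 B t}"
  shows "(\<exists>m::nat. card D = 2 * m) \<and>
         (\<forall>t\<in>D. \<exists>t'\<in>D. cut_tri_count bdry_side corner bc chi1 B t
                          = cut_tri_count bdry_side corner bc chi2 B t')"
proof -
  let ?f1 = "cut_tri_count bdry_side corner bc chi1 B"
  let ?f2 = "cut_tri_count bdry_side corner bc chi2 B"
  let ?I = "internal_tris Tri bdry_side"
  have fin: "finite ?I" using assms(1)
    by (simp add: marked_annulus_triangulation_def internal_tris_def)
  define P where "P = {t\<in>?I. ?f1 t = 1}"
  define Q where "Q = {t\<in>?I. ?f2 t = 1}"
  have bin1: "\<And>t. ?f1 t = 0 \<or> ?f1 t = 1" by (simp add: cut_tri_count_def)
  have bin2: "\<And>t. ?f2 t = 0 \<or> ?f2 t = 1" by (simp add: cut_tri_count_def)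
  have s1: "cut_count Tri bdry_side corner bc chi1 B = card P"
  proof -
    have "cut_count Tri bdry_side corner bc chi1 B = (\<Sum>t\<in>?I. if t \<in> P then 1 else 0)"
      unfolding cut_count_def P_def
      by (rule sum.cong) (simp_all add: cut_tri_count_def)
    also have "\<dots> = card P" using fin by (simp add: sum.If_cases P_def Int_def)
    finally show ?thesis .
  qed
  have s2: "cut_count Tri bdry_side corner bc chi2 B = card Q"
  proof -
    have "cut_count Tri bdry_side corner bc chi2 B = (\<Sum>t\<in>?I. if t \<in> Q then 1 else 0)"
      unfolding cut_count_def Q_def
      by (rule sum.cong) (simp_all add: cut_tri_count_def)
    also have "\<dots> = card Q" using fin by (simp add: sum.If_cases Q_def Int_def)
    finally show ?thesis .
  qed
  have cPQ: "card P = card Q" using s1 s2 assms(5) by simp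
  have finP: "finite P" "finite Q" using fin by (auto simp: P_def Q_def)
  have Dsplit: "D = (P - Q) \<union> (Q - P)"
    unfolding D_def P_def Q_def
    using bin1 bin2 by (auto simp: cut_tri_count_def internal_tris_def)
  have e1: "card (P - Q) = card P - card (P \<inter> Q)" using finP by (simp add: card_Diff_subset_Int)
  have e2: "card (Q - P) = card Q - card (Q \<inter> P)" using finP by (simp add: card_Diff_subset_Int)
  have eq: "card (P - Q) = card (Q - P)" using e1 e2 cPQ by (simp add: Int_commute)
  have cD: "card D = card (P - Q) + card (Q - P)"
    unfolding Dsplit using finP by (subst card_Un_disjoint) auto
  have part1: "\<exists>m::nat. card D = 2 * m" using cD eq by (intro exI[of _ "card (P - Q)"]) simp
  have part2: "\<forall>t\<in>D. \<exists>t'\<in>D. ?f1 t = ?f2 t'"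
  proof
    fix t assume tD: "t \<in> D"
    show "\<exists>t'\<in>D. ?f1 t = ?f2 t'"
    proof (cases "t \<in> P - Q")
      case True
      then have "card (Q - P) > 0" using eq finP by (metis card_gt_0_iff empty_iff finite_Diff)
      then obtain t' where t': "t' \<in> Q - P" by (metis card_gt_0_iff ex_in_conv)
      have "?f1 t = 1" using True by (auto simp: P_def)
      moreover have "?f2 t' = 1" using t' by (auto simp: Q_def)
      moreover have "t' \<in> D" using t' Dsplit by blast
      ultimately show ?thesis by (intro bexI[of _ t']) simp_all
    next
      case False
      then have tQP: "t \<in> Q - P" using tD Dsplit by auto
      then have "card (P - Q) > 0" using eq finP by (metis card_gt_0_iff empty_iff finite_Diff)
      then obtain t' where t': "t' \<in> P - Q" by (metis card_gt_0_iff ex_in_conv)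
      have "?f1 t = 0" using tQP bin1 by (auto simp: P_def Q_def internal_tris_def cut_tri_count_def)
      moreover have "?f2 t' = 0" using t' bin2 by (auto simp: P_def Q_def internal_tris_def cut_tri_count_def)
      moreover have "t' \<in> D" using t' Dsplit by blast
      ultimately show ?thesis by (intro bexI[of _ t']) simp_all
    qed
  qed
  show ?thesis using part1 part2 by blast
qed

end
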